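(* For all $y,k\in\mathbb N_0$, we have $y+2k+\{4,6,7,8,10,11\}+4\cdot[0,k]\in\mathcal L(C_2^5)$.
   Context: $C_2^r$ denotes an elementary abelian $2$-group of rank $r$; $[a,b]=\{x\in\mathbb Z:a\le x\le b\}$. For $L,L'\subset\mathbb Z$ and $y,k\in\mathbb Z$: $L+L'=\{a+b:a\in L,b\in L'\}$, $y+L=\{y\}+L$, and $k\cdot L=\{ka:a\in L\}$ (so $4\cdot[0,k]=\{0,4,\dots,4k\}$). For a subset $G_0$ of a finite abelian group $G$, a sequence over $G_0$ is an element of the free abelian monoid $\mathcal F(G_0)$ with basis $G_0$ (a finite unordered list of elements of $G_0$, repetitions allowed). $\mathcal B(G_0)$ is the monoid of zero-sum sequences over $G_0$ (including the empty sequence). An atom is a minimal zero-sum sequence, i.e. a nonempty zero-sum sequence that is not a product of two nonempty zero-sum sequences. For $B\in\mathcal B(G_0)$, $\mathsf L(B)=\{k\in\mathbb N_0: B \text{ is a product of } k \text{ atoms}\}$, and $\mathcal L(G_0)=\{\mathsf L(B):B\in\mathcal B(G_0)\}$; $\mathcal L(G)$ is the case $G_0=G$. *)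

theory Defs
  imports "HOL-Analysis.Analysis" "HOL-Library.Z2" "HOL-Library.Multiset"
begin

text \<open>Sequences over G0 are finite multisets of elements of G0 (free abelian monoid F(G0)).\<close>

definition zero_sum_seqs :: "'a::comm_monoid_add set \<Rightarrow> 'a multiset set" where
  "zero_sum_seqs G0 = {S. set_mset S \<subseteq> G0 \<and> sum_mset S = 0}"

definition is_atom :: "'a::comm_monoid_add set \<Rightarrow> 'a multiset \<Rightarrow> bool" where
  "is_atom G0 A \<longleftrightarrow> A \<in> zero_sum_seqs G0 \<and> A \<noteq> {#} \<and>
     \<not> (\<exists>U V. U \<in> zero_sum_seqs G0 \<and> V \<in> zero_sum_seqs G0 \<and> U \<noteq> {#} \<and> V \<noteq> {#} \<and> A = U + V)"

definition lengths :: "'a::comm_monoid_add set \<Rightarrow> 'a multiset \<Rightarrow> nat set" where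
  "lengths G0 B = {k. \<exists>As :: 'a multiset multiset.
      size As = k \<and> (\<forall>A\<in>#As. is_atom G0 A) \<and> sum_mset As = B}"

definition system_of_lengths :: "'a::comm_monoid_add set \<Rightarrow> nat set set" where
  "system_of_lengths G0 = {lengths G0 B | B. B \<in> zero_sum_seqs G0}"

type_synonym C2_5 = "bit ^ 5"

end

theory Submission imports Defs begin

lemma exhaust_5:
  fixes x :: 5
  shows "x = 1 \<or> x = 2 \<or> x = 3 \<or> x = 4 \<or> x = 5"
proof (induct x)
  case (of_int z)
  then have "z = 0 \<or> z = 1 \<or> z = 2 \<or> z = 3 \<or> z = 4" by fastforce
  then show ?case by auto
qed

lemma forall_5: "(\<forall>i::5. P i) \<longleftrightarrow> P 1 \<and> P 2 \<and> P 3 \<and> P 4 \<and> P 5"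
  by (metis exhaust_5)

definition vv :: "bool \<Rightarrow> bool \<Rightarrow> bool \<Rightarrow> bool \<Rightarrow> bool \<Rightarrow> C2_5" where
  "vv x1 x2 x3 x4 x5 = (\<chi> i. if i = 1 then of_bool x1 else if i = 2 then of_bool x2
     else if i = 3 then of_bool x3 else if i = 4 then of_bool x4 else of_bool x5)"

lemma vv_comp:
  "vv x1 x2 x3 x4 x5 $ 1 = of_bool x1" "vv x1 x2 x3 x4 x5 $ 2 = of_bool x2"
  "vv x1 x2 x3 x4 x5 $ 3 = of_bool x3" "vv x1 x2 x3 x4 x5 $ 4 = of_bool x4"
  "vv x1 x2 x3 x4 x5 $ 5 = of_bool x5"
  by (simp_all add: vv_def)

lemma vv_eq [simp]: "vv x1 x2 x3 x4 x5 = vv y1 y2 y3 y4 y5 \<longleftrightarrow>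
   (x1 = y1 \<and> x2 = y2 \<and> x3 = y3 \<and> x4 = y4 \<and> x5 = y5)"
  by (simp add: vec_eq_iff forall_5 vv_comp)

lemma vv_zero: "(0::C2_5) = vv False False False False False"
  by (simp add: vec_eq_iff forall_5 vv_comp)

lemma vv_eq0 [simp]: "vv x1 x2 x3 x4 x5 = 0 \<longleftrightarrow> \<not>x1 \<and> \<not>x2 \<and> \<not>x3 \<and> \<not>x4 \<and> \<not>x5"
                     "0 = vv x1 x2 x3 x4 x5 \<longleftrightarrow> \<not>x1 \<and> \<not>x2 \<and> \<not>x3 \<and> \<not>x4 \<and> \<not>x5"
  by (auto simp: vv_zero)

lemma of_bool_bit_add: "(of_bool x + of_bool y :: bit) = of_bool (x \<noteq> y)"
  by (cases x; cases y; simp)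

lemma vv_add [simp]: "vv x1 x2 x3 x4 x5 + vv y1 y2 y3 y4 y5 =
    vv (x1 \<noteq> y1) (x2 \<noteq> y2) (x3 \<noteq> y3) (x4 \<noteq> y4) (x5 \<noteq> y5)"
  by (simp add: vec_eq_iff forall_5 vv_comp of_bool_bit_add)

lemma self_add_C2 [simp]: "(x::C2_5) + x = 0"
  by (simp add: vec_eq_iff)


definition "ga = vv True False False False False"
definition "gb = vv False True False False False"
definition "gc = vv False False True False False"
definition "gd = vv False False False True False"
definition "gp = vv False False False False True"
definition "gq = vv True True True True True"
definition "gr = vv True True False False True"
definition "gs = vv False False True True True"
lemmas els = ga_def gb_def gc_def gd_def gp_def gq_def gr_def gs_def

definition "C1 = {#ga,gb,gp,gr#}"
definition "C2 = {#ga,gb,gq,gs#}"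
definition "C3 = {#gc,gd,gp,gs#}"
definition "C4 = {#gc,gd,gq,gr#}"
definition "C5 = {#gp,gq,gr,gs#}"
definition "CW = {#ga,gb,gc,gd,gp,gq#}"
definition "CV = {#ga,gb,gc,gd,gr,gs#}"
lemmas circs = C1_def C2_def C3_def C4_def C5_def CW_def CV_def

definition ind :: "bool \<Rightarrow> C2_5 \<Rightarrow> C2_5 multiset" where
  "ind P x = (if P then {#x#} else {#})"

lemma sum_ind: "sum_mset (ind P (vv x1 x2 x3 x4 x5)) = vv (P\<and>x1) (P\<and>x2) (P\<and>x3) (P\<and>x4) (P\<and>x5)"
  by (simp add: ind_def vv_zero)

lemma dist [simp]:
  "ga \<noteq> gb" "ga \<noteq> gc" "ga \<noteq> gd" "ga \<noteq> gp" "ga \<noteq> gq" "ga \<noteq> gr" "ga \<noteq> gs"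
  "gb \<noteq> gc" "gb \<noteq> gd" "gb \<noteq> gp" "gb \<noteq> gq" "gb \<noteq> gr" "gb \<noteq> gs"
  "gc \<noteq> gd" "gc \<noteq> gp" "gc \<noteq> gq" "gc \<noteq> gr" "gc \<noteq> gs"
  "gd \<noteq> gp" "gd \<noteq> gq" "gd \<noteq> gr" "gd \<noteq> gs"
  "gp \<noteq> gq" "gp \<noteq> gr" "gp \<noteq> gs"
  "gq \<noteq> gr" "gq \<noteq> gs" "gr \<noteq> gs"
  "ga \<noteq> 0" "gb \<noteq> 0" "gc \<noteq> 0" "gd \<noteq> 0" "gp \<noteq> 0" "gq \<noteq> 0" "gr \<noteq> 0" "gs \<noteq> 0"
  by (simp_all add: els)

lemma dist' [simp]:
  "gb \<noteq> ga" "gc \<noteq> ga" "gd \<noteq> ga" "gp \<noteq> ga" "gq \<noteq> ga" "gr \<noteq> ga" "gs \<noteq> ga"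
  "gc \<noteq> gb" "gd \<noteq> gb" "gp \<noteq> gb" "gq \<noteq> gb" "gr \<noteq> gb" "gs \<noteq> gb"
  "gd \<noteq> gc" "gp \<noteq> gc" "gq \<noteq> gc" "gr \<noteq> gc" "gs \<noteq> gc"
  "gp \<noteq> gd" "gq \<noteq> gd" "gr \<noteq> gd" "gs \<noteq> gd"
  "gq \<noteq> gp" "gr \<noteq> gp" "gs \<noteq> gp"
  "gr \<noteq> gq" "gs \<noteq> gq" "gs \<noteq> gr"
  "0 \<noteq> ga" "0 \<noteq> gb" "0 \<noteq> gc" "0 \<noteq> gd" "0 \<noteq> gp" "0 \<noteq> gq" "0 \<noteq> gr" "0 \<noteq> gs"
  by (simp_all add: els)

lemma count_ind: "count (ind P y) x = (if P \<and> y = x then 1 else 0)"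
  by (simp add: ind_def)

lemma decomp8:
  assumes "set_mset A \<subseteq> {ga,gb,gc,gd,gp,gq,gr,gs}" "\<forall>x. count A x \<le> 1"
  shows "A = ind (ga\<in>#A) ga + ind (gb\<in>#A) gb + ind (gc\<in>#A) gc + ind (gd\<in>#A) gd
           + ind (gp\<in>#A) gp + ind (gq\<in>#A) gq + ind (gr\<in>#A) gr + ind (gs\<in>#A) gs"
proof (rule multiset_eqI)
  fix x
  have c: "count A x = of_bool (x \<in># A)"
  proof (cases "x \<in># A")
    case True
    then have p: "count A x > 0" by simp
    have "count A x \<le> 1" using assms(2) by blast
    with p have "count A x = 1" by linarith
    with True show ?thesis by simp
  next
    case False
    then show ?thesis by (simp add: not_in_iff[symmetric])
  qed
  show "count A x = count (ind (ga\<in>#A) ga + ind (gb\<in>#A) gb + ind (gc\<in>#A) gc + ind (gd\<in>#A) gd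
           + ind (gp\<in>#A) gp + ind (gq\<in>#A) gq + ind (gr\<in>#A) gr + ind (gs\<in>#A) gs) x"
  proof (cases "x \<in> {ga,gb,gc,gd,gp,gq,gr,gs}")
    case True
    have h: "count (ind (ga\<in>#A) ga + ind (gb\<in>#A) gb + ind (gc\<in>#A) gc + ind (gd\<in>#A) gd
           + ind (gp\<in>#A) gp + ind (gq\<in>#A) gq + ind (gr\<in>#A) gr + ind (gs\<in>#A) gs) x = of_bool (x \<in># A)"
      using True unfolding count_union count_ind
      by (elim insertE emptyE; simp add: dist)
    show ?thesis by (simp only: c h)
  next
    case False
    then have "x \<notin># A" using assms(1) by blast
    then have z: "count A x = 0" by (simp add: count_eq_zero_iff)
    have nz: "ga \<noteq> x" "gb \<noteq> x" "gc \<noteq> x" "gd \<noteq> x" "gp \<noteq> x" "gq \<noteq> x" "gr \<noteq> x" "gs \<noteq> x" using False by auto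
    show ?thesis unfolding count_union count_ind z using nz by simp
  qed
qed


lemma kernel:
  assumes "set_mset A \<subseteq> {ga,gb,gc,gd,gp,gq,gr,gs}" "\<forall>x. count A x \<le> 1" "sum_mset A = 0"
  shows "A \<in> {{#}, C1, C2, C3, C4, C5, CW, CV}"
proof -
  note d = decomp8[OF assms(1,2)]
  have "sum_mset (ind (ga\<in>#A) ga + ind (gb\<in>#A) gb + ind (gc\<in>#A) gc + ind (gd\<in>#A) gd
           + ind (gp\<in>#A) gp + ind (gq\<in>#A) gq + ind (gr\<in>#A) gr + ind (gs\<in>#A) gs) = 0"
    using assms(3) by (simp only: d[symmetric])
  then have e: "(ga\<in>#A) = ((gq\<in>#A) \<noteq> (gr\<in>#A))" "(gb\<in>#A) = ((gq\<in>#A) \<noteq> (gr\<in>#A))"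
     "(gc\<in>#A) = ((gq\<in>#A) \<noteq> (gs\<in>#A))" "(gd\<in>#A) = ((gq\<in>#A) \<noteq> (gs\<in>#A))"
     "(gp\<in>#A) = ((gq\<in>#A) \<noteq> ((gr\<in>#A) \<noteq> (gs\<in>#A)))"
    unfolding sum_mset.union els sum_ind vv_add vv_eq0 by auto
  show ?thesis
    apply (subst d)
    unfolding e
    by (cases "gq\<in>#A"; cases "gr\<in>#A"; cases "gs\<in>#A"; simp add: ind_def circs)
qed


definition "setlike X \<longleftrightarrow> (\<forall>x. count X x \<le> 1)"

lemma setlike_empty [simp]: "setlike {#}" by (simp add: setlike_def)
lemma setlike_add [simp]: assumes "a \<notin># M" "setlike M" shows "setlike (add_mset a M)"
  unfolding setlike_def
proof
  fix x show "count (add_mset a M) x \<le> 1"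
  proof (cases "x = a")
    case True then show ?thesis using assms(1) by (simp add: count_eq_zero_iff)
  next
    case False then show ?thesis using assms(2) by (simp add: setlike_def)
  qed
qed

definition "Z = {#0::C2_5#}"
definition sq :: "C2_5 \<Rightarrow> C2_5 multiset" where "sq g = {#g,g#}"

lemma atom_sub:
  assumes "is_atom UNIV A" "U \<subseteq># A" "U \<noteq> {#}" "sum_mset U = 0"
  shows "U = A"
proof (rule ccontr)
  assume ne: "U \<noteq> A"
  define V where "V = A - U"
  have A: "A = U + V" using assms(2) by (simp add: V_def)
  have "V \<noteq> {#}" using ne A by auto
  moreover have "sum_mset V = 0"
  proof -
    have "sum_mset A = 0" using assms(1) by (simp add: is_atom_def zero_sum_seqs_def)
    then show ?thesis using A assms(4) by simp
  qed
  ultimately have "U \<in> zero_sum_seqs UNIV" "V \<in> zero_sum_seqs UNIV" "U \<noteq> {#}" "V \<noteq> {#}" "A = U + V"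
    using assms(3,4) A by (auto simp: zero_sum_seqs_def)
  then show False using assms(1) unfolding is_atom_def by blast
qed

lemma atom_class:
  assumes "is_atom UNIV A" "set_mset A \<subseteq> {0,ga,gb,gc,gd,gp,gq,gr,gs}"
  shows "A \<in> {Z, sq ga, sq gb, sq gc, sq gd, sq gp, sq gq, sq gr, sq gs, C1, C2, C3, C4, C5, CW, CV}"
proof -
  have ne: "A \<noteq> {#}" and zs: "sum_mset A = 0" using assms(1) by (auto simp: is_atom_def zero_sum_seqs_def)
  show ?thesis
  proof (cases "0 \<in># A")
    case True
    then have "{#0#} = A" by (intro atom_sub[OF assms(1)]) auto
    then show ?thesis by (simp add: Z_def)
  next
    case n0: False
    show ?thesis
    proof (cases "\<exists>g. count A g \<ge> 2")
      case True
      then obtain g where g: "count A g \<ge> 2" by blast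
      then have "{#g,g#} \<subseteq># A"
        by (intro mset_subset_eqI) (auto simp: count_add_mset)
      then have "{#g,g#} = A" by (intro atom_sub[OF assms(1)]) auto
      moreover have "g \<in># A" using g by (metis count_eq_zero_iff not_numeral_le_zero)
      ultimately show ?thesis using assms(2) n0 by (auto simp: sq_def)
    next
      case False
      have "\<forall>x. count A x \<le> 1"
      proof
        fix x
        from False have "\<not> 2 \<le> count A x" by blast
        then show "count A x \<le> 1" by linarith
      qed
      moreover have "set_mset A \<subseteq> {ga,gb,gc,gd,gp,gq,gr,gs}" using assms(2) n0 by auto
      ultimately have "A \<in> {{#}, C1, C2, C3, C4, C5, CW, CV}" using kernel zs by blast
      then show ?thesis using ne by auto
    qed
  qed
qed


lemma is_atom_Z: "is_atom UNIV Z"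
proof -
  have "\<not> ({#0#} = U + V \<and> U \<noteq> {#} \<and> V \<noteq> {#})" for U V :: "C2_5 multiset"
  proof
    assume h: "{#0#} = U + V \<and> U \<noteq> {#} \<and> V \<noteq> {#}"
    then have "size (U + V) = 1" by (metis size_single)
    moreover have "size U \<ge> 1" "size V \<ge> 1" using h by (auto simp: Suc_le_eq nonempty_has_size)
    ultimately show False by simp
  qed
  then show ?thesis unfolding is_atom_def zero_sum_seqs_def Z_def by auto
qed

lemma is_atom_sq: assumes "g \<noteq> 0" shows "is_atom UNIV (sq g)"
proof -
  have "\<not> ({#g,g#} = U + V \<and> U \<noteq> {#} \<and> V \<noteq> {#} \<and> sum_mset U = 0)" for U V :: "C2_5 multiset"
  proof
    assume h: "{#g,g#} = U + V \<and> U \<noteq> {#} \<and> V \<noteq> {#} \<and> sum_mset U = 0"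
    then have "size (U + V) = 2" by (metis size_add_mset size_single Suc_1)
    moreover have "size U \<ge> 1" "size V \<ge> 1" using h by (auto simp: Suc_le_eq nonempty_has_size)
    ultimately have "size U = 1" by simp
    then obtain u where u: "U = {#u#}" using size_1_singleton_mset by blast
    then have "u \<in># {#g,g#}" using h by (metis mset_subset_eq_add_left single_subset_iff)
    then have "u = g" by simp
    then show False using h u assms by simp
  qed
  then show ?thesis unfolding is_atom_def zero_sum_seqs_def sq_def by auto
qed

lemma circ_atom:
  assumes "setlike C" "set_mset C \<subseteq> {ga,gb,gc,gd,gp,gq,gr,gs}" "sum_mset C = 0" "C \<noteq> {#}"
    "\<And>X. X \<in> {C1, C2, C3, C4, C5, CW, CV} \<Longrightarrow> set_mset X \<subseteq> set_mset C \<Longrightarrow> X = C"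
  shows "is_atom UNIV C"
proof -
  have "\<not> (U + V = C \<and> U \<noteq> {#} \<and> V \<noteq> {#} \<and> sum_mset U = 0)" for U V
  proof
    assume h: "U + V = C \<and> U \<noteq> {#} \<and> V \<noteq> {#} \<and> sum_mset U = 0"
    then have sub: "U \<subseteq># C" by auto
    have "\<forall>x. count U x \<le> 1"
      using sub assms(1) unfolding setlike_def by (meson mset_subset_eq_count order_trans)
    moreover have "set_mset U \<subseteq> {ga,gb,gc,gd,gp,gq,gr,gs}" using sub assms(2) set_mset_mono by blast
    ultimately have "U \<in> {{#}, C1, C2, C3, C4, C5, CW, CV}" using kernel h by blast
    then have "U \<in> {C1, C2, C3, C4, C5, CW, CV}" using h by auto
    moreover have "set_mset U \<subseteq> set_mset C" using sub set_mset_mono by blast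
    ultimately have "U = C" using assms(5) by blast
    then show False using h by auto
  qed
  then show ?thesis using assms(3,4) unfolding is_atom_def zero_sum_seqs_def by auto
qed

lemma circs_atoms: "is_atom UNIV C1" "is_atom UNIV C2" "is_atom UNIV C3" "is_atom UNIV C4"
  "is_atom UNIV C5" "is_atom UNIV CW" "is_atom UNIV CV"
  by (rule circ_atom; auto simp: circs; simp add: els)+


definition "L = [Z, sq ga, sq gb, sq gc, sq gd, sq gp, sq gq, sq gr, sq gs, C1, C2, C3, C4, C5, CW, CV]"
definition mkf :: "nat list \<Rightarrow> C2_5 multiset multiset" where
  "mkf ns = sum_list (map2 (\<lambda>n X. replicate_mset n X) ns L)"

definition phi :: "C2_5 multiset \<Rightarrow> nat list" where
  "phi X = [count X 0, count X ga, count X gb, count X gc, count X gd, count X gp, count X gq, count X gr, count X gs]"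

lemma distinct_L: "distinct L"
proof -
  have "distinct (map phi L)"
    by (simp add: L_def phi_def Z_def sq_def circs)
  then show ?thesis by (simp add: distinct_map)
qed

lemma count_sum_rep: "count (sum_mset (replicate_mset n X)) x = n * count X x"
  by (induction n) auto

lemma count_sl: "distinct xs \<Longrightarrow>
   count (sum_list (map2 replicate_mset (map f xs) xs)) Y = (if Y \<in> set xs then f Y else 0)"
  by (induction xs) auto

lemma decomp_L:
  assumes "set_mset As \<subseteq> set L"
  shows "As = mkf (map (count As) L)"
proof (rule multiset_eqI)
  fix Y
  show "count As Y = count (mkf (map (count As) L)) Y"
    unfolding mkf_def count_sl[OF distinct_L]
    using assms by (auto simp: count_eq_zero_iff)
qed

lemma wit: "\<alpha> \<in> {4,6,7,8,10,11} \<Longrightarrow> i \<le> k \<Longrightarrow> t = y + 2*k + \<alpha> + 4*i \<Longrightarrow>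
   \<exists>\<alpha> i. \<alpha> \<in> {4,6,7,8,10,11::nat} \<and> i \<le> k \<and> t = y + 2*k + \<alpha> + 4*i"
  by blast

lemma arith_main:
  fixes y k z a b c d p q r s x1 x2 x3 x4 x5 w v :: nat
  assumes e0: "z = y"
   and ea: "2*a + x1 + x2 + w + v = 2*k+4"
   and eb: "2*b + x1 + x2 + w + v = 2*k+4"
   and ec: "2*c + x3 + x4 + w + v = 2*k+4"
   and ed: "2*d + x3 + x4 + w + v = 2*k+4"
   and ep: "2*p + x1 + x3 + x5 + w = 2*k+3"
   and eq: "2*q + x2 + x4 + x5 + w = 2*k+3"
   and er: "2*r + x1 + x4 + x5 + v = 1"
   and es: "2 * s + x2 + x3 + x5 + v = 1"
  shows "\<exists>\<alpha> i. \<alpha> \<in> {4,6,7,8,10,11::nat} \<and> i \<le> k \<and>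
     z+a+b+c+d+p+q+r+s+x1+x2+x3+x4+x5+w+v = y + 2*k + \<alpha> + 4*i"
proof -
  have r0: "r = 0" "s = 0" using er es by auto
  have h1: "x1 + x4 + x5 + v = 1" and h2: "x2 + x3 + x5 + v = 1" using er es r0 by linarith+
  have "v = 1 \<or> x5 = 1 \<or> (x1 = 1 \<and> x2 = 1) \<or> (x1 = 1 \<and> x3 = 1) \<or> (x4 = 1 \<and> x2 = 1) \<or> (x4 = 1 \<and> x3 = 1)"
  proof (cases "v = 1")
    case False
    then have "v = 0" using h1 by linarith
    show ?thesis
    proof (cases "x5 = 1")
      case False
      then have "x5 = 0" using h1 by linarith
      then have "x1 = 1 \<or> x4 = 1" "x2 = 1 \<or> x3 = 1" using h1 h2 \<open>v = 0\<close> by linarith+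
      then show ?thesis by blast
    qed simp
  qed simp
  then consider "v = 1" | "x5 = 1" | "x1 = 1 \<and> x2 = 1" | "x1 = 1 \<and> x3 = 1" | "x4 = 1 \<and> x2 = 1" | "x4 = 1 \<and> x3 = 1"
    by blast
  then show ?thesis
  proof cases
    case 1
    then have z: "x1 = 0" "x2 = 0" "x3 = 0" "x4 = 0" "x5 = 0" using er es by auto
    show ?thesis
    proof (cases "p \<le> k")
      case True then show ?thesis
        using assms r0 z 1 by - (rule wit[of 4 p], simp, linarith, linarith)
    next
      case False
      have pk: "p = k + 1" using False ep z 1 by presburger
      show ?thesis using assms r0 z 1 pk by - (rule wit[of 8 k], simp, linarith, linarith)
    qed
  next
    case 2
    then have z: "x1 = 0" "x2 = 0" "x3 = 0" "x4 = 0" "v = 0" using er es by auto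
    show ?thesis
    proof (cases "p \<le> k")
      case True then show ?thesis
        using assms r0 z 2 by - (rule wit[of 7 p], simp, linarith, linarith)
    next
      case False
      have pk: "p = k + 1" using False ep z 2 by presburger
      show ?thesis using assms r0 z 2 pk by - (rule wit[of 11 k], simp, linarith, linarith)
    qed
  next
    case 3
    then have z: "x3 = 0" "x4 = 0" "x5 = 0" "v = 0" using er es by auto
    show ?thesis
    proof (cases "p \<le> k")
      case True then show ?thesis
        using assms r0 z 3 by - (rule wit[of 6 p], simp, linarith, linarith)
    next
      case False
      have pk: "p = k + 1" using False ep z 3 by presburger
      show ?thesis using assms r0 z 3 pk by - (rule wit[of 10 k], simp, linarith, linarith)
    qed
  next
    case 4
    then have z: "x2 = 0" "x4 = 0" "x5 = 0" "v = 0" using er es by auto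
    show ?thesis using assms r0 z 4 by - (rule wit[of 8 p], simp, linarith, linarith)
  next
    case 5
    then have z: "x1 = 0" "x3 = 0" "x5 = 0" "v = 0" using er es by auto
    show ?thesis using assms r0 z 5 by - (rule wit[of 8 q], simp, linarith, linarith)
  next
    case 6
    then have z: "x1 = 0" "x2 = 0" "x5 = 0" "v = 0" using er es by auto
    show ?thesis
    proof (cases "p \<le> k")
      case True then show ?thesis
        using assms r0 z 6 by - (rule wit[of 6 p], simp, linarith, linarith)
    next
      case False
      have pk: "p = k + 1" using False ep z 6 by presburger
      show ?thesis using assms r0 z 6 pk by - (rule wit[of 10 k], simp, linarith, linarith)
    qed
  qed
qed

lemma set_sl: "set_mset (sum_list (map2 replicate_mset ns xs)) \<subseteq> set xs"
  by (auto dest: set_zip_rightD split: if_splits)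

lemma set_mkf: "set_mset (mkf ns) \<subseteq> set L"
  unfolding mkf_def by (rule set_sl)

lemma atoms_L: "X \<in> set L \<Longrightarrow> is_atom UNIV X"
  unfolding L_def using is_atom_Z is_atom_sq circs_atoms by auto

abbreviation "NS z a b c d p q r s x1 x2 x3 x4 x5 w v \<equiv> [z,a,b,c,d,p,q,r,s,x1,x2,x3,x4,x5,w,v]"

lemma count_mkf:
  "count (sum_mset (mkf (NS z a b c d p q r s x1 x2 x3 x4 x5 w v))) 0 = z"
  "count (sum_mset (mkf (NS z a b c d p q r s x1 x2 x3 x4 x5 w v))) ga = 2*a + x1 + x2 + w + v"
  "count (sum_mset (mkf (NS z a b c d p q r s x1 x2 x3 x4 x5 w v))) gb = 2*b + x1 + x2 + w + v"
  "count (sum_mset (mkf (NS z a b c d p q r s x1 x2 x3 x4 x5 w v))) gc = 2*c + x3 + x4 + w + v"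
  "count (sum_mset (mkf (NS z a b c d p q r s x1 x2 x3 x4 x5 w v))) gd = 2*d + x3 + x4 + w + v"
  "count (sum_mset (mkf (NS z a b c d p q r s x1 x2 x3 x4 x5 w v))) gp = 2*p + x1 + x3 + x5 + w"
  "count (sum_mset (mkf (NS z a b c d p q r s x1 x2 x3 x4 x5 w v))) gq = 2*q + x2 + x4 + x5 + w"
  "count (sum_mset (mkf (NS z a b c d p q r s x1 x2 x3 x4 x5 w v))) gr = 2*r + x1 + x4 + x5 + v"
  "count (sum_mset (mkf (NS z a b c d p q r s x1 x2 x3 x4 x5 w v))) gs = 2 * s + x2 + x3 + x5 + v"
  by (simp_all add: mkf_def L_def count_sum_rep Z_def sq_def circs)

lemma count_mkf_other:
  "x \<notin> {0,ga,gb,gc,gd,gp,gq,gr,gs} \<Longrightarrow> count (sum_mset (mkf (NS z a b c d p q r s x1 x2 x3 x4 x5 w v))) x = 0"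
  by (simp add: mkf_def L_def count_sum_rep Z_def sq_def circs eq_commute[of _ x])

lemma size_mkf:
  "size (mkf (NS z a b c d p q r s x1 x2 x3 x4 x5 w v)) = z+a+b+c+d+p+q+r+s+x1+x2+x3+x4+x5+w+v"
  by (simp add: mkf_def L_def)

definition Bk :: "nat \<Rightarrow> nat \<Rightarrow> C2_5 multiset" where
  "Bk y k = replicate_mset y 0 + replicate_mset (2*k+4) ga + replicate_mset (2*k+4) gb
     + replicate_mset (2*k+4) gc + replicate_mset (2*k+4) gd + replicate_mset (2*k+3) gp
     + replicate_mset (2*k+3) gq + {#gr#} + {#gs#}"

lemma count_Bk:
  "count (Bk y k) 0 = y" "count (Bk y k) ga = 2*k+4" "count (Bk y k) gb = 2*k+4"
  "count (Bk y k) gc = 2*k+4" "count (Bk y k) gd = 2*k+4" "count (Bk y k) gp = 2*k+3"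
  "count (Bk y k) gq = 2*k+3" "count (Bk y k) gr = 1" "count (Bk y k) gs = 1"
  by (simp_all add: Bk_def)

lemma count_Bk_other: "x \<notin> {0,ga,gb,gc,gd,gp,gq,gr,gs} \<Longrightarrow> count (Bk y k) x = 0"
  by (simp add: Bk_def eq_commute[of _ x])

lemma set_Bk: "set_mset (Bk y k) \<subseteq> {0,ga,gb,gc,gd,gp,gq,gr,gs}"
  by (auto simp: Bk_def)


lemma mkf_Bk:
  assumes "z = y" "2*a + x1 + x2 + w + v = 2*k+4" "2*b + x1 + x2 + w + v = 2*k+4"
   "2*c + x3 + x4 + w + v = 2*k+4" "2*d + x3 + x4 + w + v = 2*k+4"
   "2*p + x1 + x3 + x5 + w = 2*k+3" "2*q + x2 + x4 + x5 + w = 2*k+3"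
   "2*r + x1 + x4 + x5 + v = 1" "2 * s + x2 + x3 + x5 + v = 1"
  shows "sum_mset (mkf (NS z a b c d p q r s x1 x2 x3 x4 x5 w v)) = Bk y k"
proof (rule multiset_eqI)
  fix x
  show "count (sum_mset (mkf (NS z a b c d p q r s x1 x2 x3 x4 x5 w v))) x = count (Bk y k) x"
  proof (cases "x \<in> {0,ga,gb,gc,gd,gp,gq,gr,gs}")
    case True
    then show ?thesis
      by (elim insertE emptyE) (simp_all only: count_mkf count_Bk assms)
  next
    case False
    then show ?thesis by (simp only: count_mkf_other[OF False] count_Bk_other[OF False])
  qed
qed

lemma in_len:
  assumes "sum_mset (mkf ns) = B"
  shows "size (mkf ns) \<in> lengths UNIV B"
  unfolding lengths_def using assms set_mkf atoms_L by blast

lemma lower: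
  assumes "\<alpha> \<in> {4,6,7,8,10,11}" "i \<le> k"
  shows "y + 2*k + \<alpha> + 4*i \<in> lengths UNIV (Bk y k)"
proof -
  from assms(1) consider "\<alpha> = 4" | "\<alpha> = 6" | "\<alpha> = 7" | "\<alpha> = 8" | "\<alpha> = 10" | "\<alpha> = 11" by auto
  then show ?thesis
  proof cases
    case 1
    let ?ns = "NS y i i i i i i 0 0 0 0 0 0 0 (2*(k+1-i)+1) 1"
    have "sum_mset (mkf ?ns) = Bk y k" by (rule mkf_Bk; insert assms(2); arith)
    moreover have "size (mkf ?ns) = y + 2*k + \<alpha> + 4*i" unfolding size_mkf using 1 assms(2) by arith
    ultimately show ?thesis using in_len by metis
  next
    case 2
    let ?ns = "NS y i i (i+1) (i+1) i i 0 0 1 1 0 0 0 (2*(k+1-i)) 0"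
    have "sum_mset (mkf ?ns) = Bk y k" by (rule mkf_Bk; insert assms(2); arith)
    moreover have "size (mkf ?ns) = y + 2*k + \<alpha> + 4*i" unfolding size_mkf using 2 assms(2) by arith
    ultimately show ?thesis using in_len by metis
  next
    case 3
    let ?ns = "NS y (i+1) (i+1) (i+1) (i+1) i i 0 0 0 0 0 0 1 (2*(k+1-i)) 0"
    have "sum_mset (mkf ?ns) = Bk y k" by (rule mkf_Bk; insert assms(2); arith)
    moreover have "size (mkf ?ns) = y + 2*k + \<alpha> + 4*i" unfolding size_mkf using 3 assms(2) by arith
    ultimately show ?thesis using in_len by metis
  next
    case 4
    let ?ns = "NS y (i+1) (i+1) (i+1) (i+1) (i+1) (i+1) 0 0 0 0 0 0 0 (2*(k-i)+1) 1"
    have "sum_mset (mkf ?ns) = Bk y k" by (rule mkf_Bk; insert assms(2); arith)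
    moreover have "size (mkf ?ns) = y + 2*k + \<alpha> + 4*i" unfolding size_mkf using 4 assms(2) by arith
    ultimately show ?thesis using in_len by metis
  next
    case 5
    let ?ns = "NS y (i+1) (i+1) (i+2) (i+2) (i+1) (i+1) 0 0 1 1 0 0 0 (2*(k-i)) 0"
    have "sum_mset (mkf ?ns) = Bk y k" by (rule mkf_Bk; insert assms(2); arith)
    moreover have "size (mkf ?ns) = y + 2*k + \<alpha> + 4*i" unfolding size_mkf using 5 assms(2) by arith
    ultimately show ?thesis using in_len by metis
  next
    case 6
    let ?ns = "NS y (i+2) (i+2) (i+2) (i+2) (i+1) (i+1) 0 0 0 0 0 0 1 (2*(k-i)) 0"
    have "sum_mset (mkf ?ns) = Bk y k" by (rule mkf_Bk; insert assms(2); arith)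
    moreover have "size (mkf ?ns) = y + 2*k + \<alpha> + 4*i" unfolding size_mkf using 6 assms(2) by arith
    ultimately show ?thesis using in_len by metis
  qed
qed

lemma member_sub_sum: "A \<in># As \<Longrightarrow> A \<subseteq># sum_mset As"
proof -
  assume "A \<in># As"
  then obtain R where "As = add_mset A R" by (blast dest: multi_member_split)
  then show ?thesis by simp
qed

lemma upper:
  assumes "t \<in> lengths UNIV (Bk y k)"
  shows "\<exists>\<alpha> i. \<alpha> \<in> {4,6,7,8,10,11::nat} \<and> i \<le> k \<and> t = y + 2*k + \<alpha> + 4*i"
proof -
  obtain As where As: "size As = t" "\<forall>A\<in>#As. is_atom UNIV A" "sum_mset As = Bk y k"
    using assms unfolding lengths_def by blast
  have "set_mset As \<subseteq> set L"
  proof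
    fix A assume A: "A \<in># As"
    then have "A \<subseteq># Bk y k" using As(3) member_sub_sum by metis
    then have "set_mset A \<subseteq> {0,ga,gb,gc,gd,gp,gq,gr,gs}" using set_Bk set_mset_mono by blast
    then show "A \<in> set L" using atom_class As(2) A unfolding L_def by simp
  qed
  then have d0: "As = mkf (map (count As) L)" by (rule decomp_L)
  then have d: "As = mkf (NS (count As Z) (count As (sq ga)) (count As (sq gb)) (count As (sq gc))
     (count As (sq gd)) (count As (sq gp)) (count As (sq gq)) (count As (sq gr)) (count As (sq gs))
     (count As C1) (count As C2) (count As C3) (count As C4) (count As C5) (count As CW) (count As CV))"
    (is "As = mkf ?ns")
    unfolding L_def list.map .
  have s: "sum_mset (mkf ?ns) = Bk y k" using As(3) arg_cong[OF d, of sum_mset] by simp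
  note c = count_Bk[of y k, folded s, unfolded count_mkf]
  have "t = size (mkf ?ns)" using As(1) arg_cong[OF d, of size] by simp
  then show ?thesis unfolding size_mkf using arith_main[OF c] by simp
qed


lemma sum_sum_zero: "(\<forall>A\<in>#As. sum_mset A = (0::C2_5)) \<Longrightarrow> sum_mset (sum_mset As) = 0"
  by (induction As) auto

lemma Bk_zs: "Bk y k \<in> zero_sum_seqs UNIV"
proof -
  have "y + 2*k + 4 + 4*0 \<in> lengths UNIV (Bk y k)" by (rule lower) auto
  then obtain As where As: "\<forall>A\<in>#As. is_atom UNIV A" "sum_mset As = Bk y k"
    unfolding lengths_def by blast
  have "\<forall>A\<in>#As. sum_mset A = 0" using As(1) by (auto simp: is_atom_def zero_sum_seqs_def)
  then have "sum_mset (Bk y k) = 0" using As(2) sum_sum_zero by metis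
  then show ?thesis by (simp add: zero_sum_seqs_def)
qed

theorem lemma3p10:
  fixes y k :: nat
  shows "{y + 2 * k + a + 4 * i | a i. a \<in> {4, 6, 7, 8, 10, 11} \<and> i \<le> k}
           \<in> system_of_lengths (UNIV :: C2_5 set)"
proof -
  have eq: "{y + 2 * k + a + 4 * i | a i. a \<in> {4, 6, 7, 8, 10, 11} \<and> i \<le> k} = lengths UNIV (Bk y k)"
  proof (rule set_eqI)
    fix t
    show "t \<in> {y + 2 * k + a + 4 * i | a i. a \<in> {4, 6, 7, 8, 10, 11} \<and> i \<le> k} \<longleftrightarrow> t \<in> lengths UNIV (Bk y k)"
    proof
      assume "t \<in> {y + 2 * k + a + 4 * i | a i. a \<in> {4, 6, 7, 8, 10, 11} \<and> i \<le> k}"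
      then obtain a i where "t = y + 2 * k + a + 4 * i" "a \<in> {4, 6, 7, 8, 10, 11}" "i \<le> k" by blast
      then show "t \<in> lengths UNIV (Bk y k)" using lower by blast
    next
      assume "t \<in> lengths UNIV (Bk y k)"
      then obtain a i where "a \<in> {4, 6, 7, 8, 10, 11::nat}" "i \<le> k" "t = y + 2*k + a + 4*i"
        using upper by blast
      then show "t \<in> {y + 2 * k + a + 4 * i | a i. a \<in> {4, 6, 7, 8, 10, 11} \<and> i \<le> k}" by blast
    qed
  qed
  show ?thesis unfolding system_of_lengths_def using eq Bk_zs by blast
qed

end
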